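(* For $d\ge 4$ and $\ell\ge 4$, the cyclic Kautz digraph $CK(d,\ell)$ has diameter $D=2\ell-2$.
   Context: The cyclic Kautz digraph $CK(d,\ell)$ has vertex set $\{x_1\ldots x_\ell\in\mathbb Z_{d+1}^\ell : x_i\neq x_{i+1}\ (1\le i\le \ell-1),\ x_\ell\neq x_1\}$ and arcs $x_1x_2\ldots x_\ell\to x_2\ldots x_\ell y$ for every $y\in\mathbb Z_{d+1}$ with $y\neq x_2,x_\ell$. Distances are directed distances; the diameter is the maximum distance over all ordered pairs of vertices. *)

theory Defs
  imports Main
begin

text \<open>Cyclic Kautz digraph CK(d,l). Vertices are words x_1...x_l over the alphabet
  Z_{d+1}, represented as lists of naturals below d+1 (index i of the list = x_{i+1}).\<close>

definition ck_vertex :: "nat \<Rightarrow> nat \<Rightarrow> nat list \<Rightarrow> bool" where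
  "ck_vertex d l xs \<longleftrightarrow>
     length xs = l \<and> (\<forall>i<l. xs ! i < d + 1) \<and>
     (\<forall>i. i + 1 < l \<longrightarrow> xs ! i \<noteq> xs ! (i + 1)) \<and>
     xs ! (l - 1) \<noteq> xs ! 0"

definition ck_arc :: "nat \<Rightarrow> nat \<Rightarrow> nat list \<Rightarrow> nat list \<Rightarrow> bool" where
  "ck_arc d l xs ys \<longleftrightarrow>
     ck_vertex d l xs \<and>
     (\<exists>y. y < d + 1 \<and> y \<noteq> xs ! 1 \<and> y \<noteq> xs ! (l - 1) \<and> ys = tl xs @ [y])"

definition ck_dist :: "nat \<Rightarrow> nat \<Rightarrow> nat list \<Rightarrow> nat list \<Rightarrow> nat" where
  "ck_dist d l xs ys = (LEAST n. (ck_arc d l ^^ n) xs ys)"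

text \<open>Diameter: maximum distance over all ordered pairs of vertices
  (meaningful when the digraph is strongly connected, which we assert separately).\<close>
definition ck_diameter :: "nat \<Rightarrow> nat \<Rightarrow> nat" where
  "ck_diameter d l = Max {ck_dist d l xs ys | xs ys. ck_vertex d l xs \<and> ck_vertex d l ys}"

end

theory Submission
  imports Defs
begin

definition good :: "nat \<Rightarrow> nat \<Rightarrow> nat list \<Rightarrow> bool" where
  "good d l w \<longleftrightarrow> (\<forall>j. l \<le> j \<and> j < length w \<longrightarrow>
      w!j < d+1 \<and> w!j \<noteq> w!(j-1) \<and> w!j \<noteq> w!(j+1-l))"

lemma arc_vertex:
  assumes "l \<ge> 2" "ck_arc d l xs ys" shows "ck_vertex d l ys"
proof -
  from assms(2) obtain y where v: "ck_vertex d l xs" and y: "y < d+1" "y \<noteq> xs!1" "y \<noteq> xs!(l-1)"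
    and ys: "ys = tl xs @ [y]" unfolding ck_arc_def by blast
  have len: "length xs = l" using v unfolding ck_vertex_def by simp
  have nth: "ys!i = (if i < l-1 then xs!(Suc i) else y)" if "i < l" for i
    using that len assms(1) by (auto simp: ys nth_append nth_tl)
  show ?thesis unfolding ck_vertex_def
  proof (intro conjI allI impI)
    show "length ys = l" using ys len assms(1) by simp
    show "ys!i < d+1" if "i < l" for i using v y that nth[OF that] unfolding ck_vertex_def by auto
    show "ys!i \<noteq> ys!(i+1)" if "i+1 < l" for i
      using v y that nth[of i] nth[of "i+1"] unfolding ck_vertex_def by (cases "Suc i = l - 1") auto
    show "ys!(l-1) \<noteq> ys!0" using y nth[of "l-1"] nth[of 0] assms(1) by auto
  qed
qed

lemma walk_of_seq:
  assumes "l \<ge> 2"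
  shows "length w = l+n \<Longrightarrow> ck_vertex d l (take l w) \<Longrightarrow> good d l w \<Longrightarrow>
    (ck_arc d l ^^ n) (take l w) (drop n w)"
proof (induction n arbitrary: w)
  case 0
  then show ?case by simp
next
  case (Suc n)
  define w' where "w' = tl w"
  have g: "w!l < d+1" "w!l \<noteq> w!(l-1)" "w!l \<noteq> w!1"
    using Suc.prems(1,3) unfolding good_def by (auto dest: spec[of _ l])
  have tk: "take l w' = tl (take l w) @ [w!l]"
  proof -
    have "take l w' = tl (take (Suc l) w)" unfolding w'_def by (cases w) auto
    also have "take (Suc l) w = take l w @ [w!l]" using Suc.prems(1) by (simp add: take_Suc_conv_app_nth)
    also have "tl \<dots> = tl (take l w) @ [w!l]" using assms Suc.prems(1) by (intro tl_append2) auto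
    finally show ?thesis .
  qed
  have arc: "ck_arc d l (take l w) (take l w')"
    unfolding ck_arc_def using Suc.prems g assms tk by auto
  have v': "ck_vertex d l (take l w')" using arc_vertex[OF assms arc] .
  have gw': "good d l w'" unfolding good_def
  proof (intro allI impI)
    fix j assume j: "l \<le> j \<and> j < length w'"
    then have "w!(Suc j) < d+1 \<and> w!(Suc j) \<noteq> w!(Suc j - 1) \<and> w!(Suc j) \<noteq> w!(Suc j + 1 - l)"
      using Suc.prems(3) unfolding good_def w'_def by (auto dest: spec[of _ "Suc j"])
    moreover have "w'!j = w!(Suc j)" "w'!(j-1) = w!(Suc j - 1)" "w'!(j+1-l) = w!(Suc j + 1 - l)"
      using j assms unfolding w'_def by (auto simp: nth_tl Suc_diff_le)
    ultimately show "w'!j < d+1 \<and> w'!j \<noteq> w'!(j-1) \<and> w'!j \<noteq> w'!(j+1-l)" by simp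
  qed
  have "(ck_arc d l ^^ n) (take l w') (drop n w')"
    using Suc.IH[of w'] Suc.prems(1) v' gw' unfolding w'_def by simp
  then have "(ck_arc d l ^^ Suc n) (take l w) (drop n w')" by (rule relpowp_Suc_I2[where P="ck_arc d l", OF arc])
  then show ?case unfolding w'_def by (simp add: drop_Suc)
qed


lemma seq_of_walk:
  assumes "l \<ge> 2"
  shows "(ck_arc d l ^^ n) x y \<Longrightarrow> length x = l \<Longrightarrow> \<exists>w. length w = l+n \<and> take l w = x \<and> drop n w = y \<and>
     (\<forall>j. l \<le> j \<and> j < length w \<longrightarrow> w!j \<noteq> w!(j-1) \<and> w!j \<noteq> w!(j+1-l))"
proof (induction n arbitrary: x)
  case 0
  then show ?case by (intro exI[of _ x]) auto
next
  case (Suc n)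
  from Suc.prems(1) obtain x' where arc: "ck_arc d l x x'" and wk: "(ck_arc d l ^^ n) x' y"
    by (rule relpowp_Suc_E2)
  from arc obtain c where c: "c \<noteq> x!1" "c \<noteq> x!(l-1)" and x': "x' = tl x @ [c]"
    unfolding ck_arc_def by blast
  have lx': "length x' = l" using x' Suc.prems(2) assms by simp
  from Suc.IH[OF wk lx'] obtain w' where w': "length w' = l+n" "take l w' = x'" "drop n w' = y"
    and cw: "\<forall>j. l \<le> j \<and> j < length w' \<longrightarrow> w'!j \<noteq> w'!(j-1) \<and> w'!j \<noteq> w'!(j+1-l)" by blast
  have xne: "x \<noteq> []" using Suc.prems(2) assms by auto
  define w where "w = hd x # w'"
  have nw: "w!j = w'!(j-1)" if "j \<ge> 1" for j using that unfolding w_def by (cases j) auto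
  have x'n: "x'!i = w'!i" if "i < l" for i using w'(2) that by auto
  have x'n2: "x'!i = (if i < l-1 then x!(Suc i) else c)" if "i < l" for i
    using that Suc.prems(2) assms by (auto simp: x' nth_append nth_tl)
  have "take l w = hd x # take (l-1) w'" unfolding w_def using assms by (cases l) auto
  also have "take (l-1) w' = take (l-1) x'" using w'(2) assms
    by (metis diff_le_self min.absorb1 take_take)
  also have "\<dots> = tl x" using x' Suc.prems(2) by simp
  finally have tw: "take l w = x" using xne by simp
  show ?case
  proof (intro exI[of _ w] conjI)
    show "length w = l + Suc n" using w'(1) unfolding w_def by simp
    show "take l w = x" by (rule tw)
    show "drop (Suc n) w = y" using w'(3) unfolding w_def by simp
    show "\<forall>j. l \<le> j \<and> j < length w \<longrightarrow> w!j \<noteq> w!(j-1) \<and> w!j \<noteq> w!(j+1-l)"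
    proof (intro allI impI)
    fix j assume j: "l \<le> j \<and> j < length w"
    show "w!j \<noteq> w!(j-1) \<and> w!j \<noteq> w!(j+1-l)"
    proof (cases "j = l")
      case True
      have "w!l = c" using nw[of l] x'n[of "l-1"] x'n2[of "l-1"] assms by auto
      moreover have "w!(l-1) = x!(l-1)"
      proof -
        have e: "l-1-1 = l-2" "l-2 < l-1" "Suc (l-2) = l-1" "l - 2 < l" using assms by auto
        have "w!(l-1) = w'!(l-2)" using nw[of "l-1"] assms e(1) by simp
        also have "\<dots> = x'!(l-2)" using x'n[of "l-2"] e by simp
        also have "\<dots> = x!(l-1)" using x'n2[of "l-2"] e by simp
        finally show ?thesis .
      qed
      moreover have "w!1 = x!1" using nw[of 1] x'n[of 0] x'n2[of 0] assms by simp
      ultimately show ?thesis using True c by simp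
    next
      case False
      then have "l \<le> j-1 \<and> j-1 < length w'" using j unfolding w_def by auto
      then have "w'!(j-1) \<noteq> w'!(j-1-1) \<and> w'!(j-1) \<noteq> w'!(j-1+1-l)" using cw by blast
      moreover have "w!j = w'!(j-1)" "w!(j-1) = w'!(j-1-1)" "w!(j+1-l) = w'!(j-1+1-l)"
        using nw j False assms by auto
      ultimately show ?thesis by simp
    qed
    qed
  qed
qed

lemma pick5: "\<exists>c::nat. c < 5 \<and> c \<noteq> p \<and> c \<noteq> q \<and> c \<noteq> r \<and> c \<noteq> s"
proof (rule ccontr)
  assume "\<not> ?thesis"
  then have "{0..<5} \<subseteq> {p,q,r,s}" by auto
  then have "card {0..<(5::nat)} \<le> card {p,q,r,s}" by (intro card_mono) auto
  also have "\<dots> \<le> 4" by (simp add: card_insert_le_m1 card_insert_if)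
  finally show False by simp
qed

lemma zexist:
  fixes p :: nat and a b e :: "nat \<Rightarrow> nat"
  assumes "d \<ge> 4"
  shows "\<exists>z. length z = k \<and> (\<forall>i<k. z!i < d+1 \<and> z!i \<noteq> (if i = 0 then p else z!(i-1)) \<and>
           z!i \<noteq> a i \<and> z!i \<noteq> b i \<and> z!i \<noteq> e i)"
proof (induction k)
  case 0
  then show ?case by simp
next
  case (Suc k)
  then obtain z where z: "length z = k" "\<forall>i<k. z!i < d+1 \<and> z!i \<noteq> (if i = 0 then p else z!(i-1)) \<and>
           z!i \<noteq> a i \<and> z!i \<noteq> b i \<and> z!i \<noteq> e i" by blast
  obtain c :: nat where c: "c < 5" "c \<noteq> (if k = 0 then p else z!(k-1))" "c \<noteq> a k" "c \<noteq> b k" "c \<noteq> e k"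
    using pick5 by blast
  show ?case
  proof (intro exI[of _ "z @ [c]"] conjI)
    show "length (z @ [c]) = Suc k" using z by simp
    show "\<forall>i<Suc k. (z @ [c])!i < d+1 \<and> (z @ [c])!i \<noteq> (if i = 0 then p else (z @ [c])!(i-1)) \<and>
           (z @ [c])!i \<noteq> a i \<and> (z @ [c])!i \<noteq> b i \<and> (z @ [c])!i \<noteq> e i"
    proof (intro allI impI)
    fix i assume i: "i < Suc k"
    show "(z @ [c])!i < d+1 \<and> (z @ [c])!i \<noteq> (if i = 0 then p else (z @ [c])!(i-1)) \<and>
           (z @ [c])!i \<noteq> a i \<and> (z @ [c])!i \<noteq> b i \<and> (z @ [c])!i \<noteq> e i"
    proof (cases "i = k")
      case True
      then show ?thesis using c z assms by (auto simp: nth_append)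
    next
      case False
      then have "i < k" using i by simp
      then show ?thesis using z(1) z(2)[rule_format, of i] by (auto simp: nth_append)
    qed
    qed
  qed
qed


lemma upper:
  assumes d: "d \<ge> 4" and l: "l \<ge> 4" and vx: "ck_vertex d l x" and vy: "ck_vertex d l y"
  shows "\<exists>n \<le> 2*l-2. (ck_arc d l ^^ n) x y"
proof -
  define s where "s = (if y!0 = x!(l-1) then 2 else 1::nat)"
  define k where "k = l - 1 - s"
  have s12: "s = 1 \<or> s = 2" unfolding s_def by auto
  have s_iff: "s = 1 \<longleftrightarrow> y!0 \<noteq> x!(l-1)" unfolding s_def by auto
  have ks: "k + s + 1 = l" "k \<ge> 1" using s12 l unfolding k_def by auto
  have lx: "length x = l" and ly: "length y = l" using vx vy unfolding ck_vertex_def by auto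
  have x_lt: "\<forall>i<l. x!i < d+1" and x_c: "\<forall>i. i+1 < l \<longrightarrow> x!i \<noteq> x!(i+1)" and x_e: "x!(l-1) \<noteq> x!0"
    using vx unfolding ck_vertex_def by auto
  have y_lt: "\<forall>i<l. y!i < d+1" and y_c: "\<forall>i. i+1 < l \<longrightarrow> y!i \<noteq> y!(i+1)" and y_e: "y!(l-1) \<noteq> y!0"
    using vy unfolding ck_vertex_def by auto
  obtain z where zl: "length z = k" and zc: "\<forall>i<k. z!i < d+1 \<and> z!i \<noteq> (if i = 0 then x!(l-1) else z!(i-1)) \<and>
           z!i \<noteq> x!(i+1) \<and> z!i \<noteq> y!(i+s) \<and> z!i \<noteq> y!0"
    using zexist[OF d, of k "x!(l-1)" "\<lambda>i. x!(i+1)" "\<lambda>i. y!(i+s)" "\<lambda>_. y!0"] by blast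
  define w where "w = x @ z @ y"
  have lw: "length w = l + (l+k)" unfolding w_def using lx zl ly by simp
  have w1: "w!j = x!j" if "j < l" for j using that lx unfolding w_def by (simp add: nth_append)
  have w2: "w!j = z!(j-l)" if "l \<le> j" "j < l+k" for j
  proof -
    have "j - l < k" using that by linarith
    then show ?thesis using that lx zl unfolding w_def by (simp add: nth_append)
  qed
  have w3: "w!j = y!(j-l-k)" if "l+k \<le> j" for j
  proof -
    have "\<not> j - l < k" "l \<le> j" using that by linarith+
    then show ?thesis using that lx zl unfolding w_def by (simp add: nth_append)
  qed
  have tw: "take l w = x" and dw: "drop (l+k) w = y" unfolding w_def using lx zl by auto
  have g: "good d l w" unfolding good_def
  proof (intro allI impI)
    fix j assume j: "l \<le> j \<and> j < length w"
    show "w!j < d+1 \<and> w!j \<noteq> w!(j-1) \<and> w!j \<noteq> w!(j+1-l)"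
    proof (cases "j < l+k")
      case True
      define i where "i = j - l"
      have i: "i < k" "j = l + i" using True j unfolding i_def by auto
      have a: "w!j = z!i" using w2[of j] j True unfolding i_def by simp
      have b: "w!(j-1) = (if i = 0 then x!(l-1) else z!(i-1))"
        using w1[of "j-1"] w2[of "j-1"] i l by auto
      have c: "w!(j+1-l) = x!(i+1)" using w1[of "i+1"] i ks by auto
      show ?thesis using a b c zc i(1) by auto
    next
      case False
      define m where "m = j - l - k"
      have m: "m < l" "j = l + k + m" using False j lw unfolding m_def by auto
      have a: "w!j = y!m" using w3[of j] False unfolding m_def by simp
      have b: "w!j \<noteq> w!(j-1)"
      proof (cases "m = 0")
        case True
        then have "w!(j-1) = z!(k-1)" using w2[of "j-1"] m ks by auto
        moreover have "z!(k-1) \<noteq> y!0" using zc ks by simp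
        ultimately show ?thesis using a True by simp
      next
        case False
        then have "w!(j-1) = y!(m-1)" using w3[of "j-1"] m by auto
        moreover have "y!(m-1) \<noteq> y!(m-1+1)" using y_c[rule_format, of "m-1"] m False by simp
        moreover have "m-1+1 = m" using False by simp
        ultimately show ?thesis using a False by simp
      qed
      have c: "w!j \<noteq> w!(j+1-l)"
      proof -
        have jj: "j+1-l = k+m+1" using m by simp
        consider (A) "m < s" | (B) "s \<le> m" "m < l - 1" | (C) "m = l - 1" using m by linarith
        then show ?thesis
        proof cases
          case A
          then have "w!(j+1-l) = x!(k+m+1)" using w1[of "k+m+1"] jj ks by auto
          show ?thesis
          proof (cases "s = 1")
            case True
            then have "m = 0" "k+m+1 = l-1" using A ks by auto
            moreover have "y!0 \<noteq> x!(l-1)" using True s_iff by blast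
            ultimately show ?thesis using a \<open>w!(j+1-l) = x!(k+m+1)\<close> by simp
          next
            case False
            then have s2: "s = 2" "y!0 = x!(l-1)" using s12 s_iff by auto
            show ?thesis
            proof (cases "m = 0")
              case True
              then have "k+m+1 = l-2" using ks s2 by simp
              moreover have "x!(l-2) \<noteq> x!(l-2+1)" using x_c l by simp
              moreover have "l-2+1 = l-1" using l by simp
              ultimately show ?thesis using a \<open>w!(j+1-l) = x!(k+m+1)\<close> True s2 by simp
            next
              case False
              then have "m = 1" "k+m+1 = l-1" using A ks s2 by auto
              moreover have "y!0 \<noteq> y!1" using y_c[rule_format, of 0] l by simp
              ultimately show ?thesis using a \<open>w!(j+1-l) = x!(k+m+1)\<close> s2 by simp
            qed
          qed
        next
          case B
          then have "w!(j+1-l) = z!(m-s)" using w2[of "k+m+1"] jj ks by auto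
          moreover have "m - s < k" using B ks by auto
          ultimately show ?thesis using a zc B by auto
        next
          case C
          then have "w!(j+1-l) = y!0" using w3[of "k+m+1"] jj ks by auto
          then show ?thesis using a C y_e by simp
        qed
      qed
      show ?thesis using a b c y_lt m by auto
    qed
  qed
  have "(ck_arc d l ^^ (l+k)) (take l w) (drop (l+k) w)"
    using walk_of_seq[of l w "l+k" d] l lw vx tw g by simp
  then show ?thesis using tw dw ks s12 by (intro exI[of _ "l+k"]) auto
qed


definition fx :: "nat \<Rightarrow> nat \<Rightarrow> nat" where
  "fx l i = (if i = l-1 then 2 else (l-1-i) mod 2)"
definition fy :: "nat \<Rightarrow> nat \<Rightarrow> nat" where
  "fy l i = (if i = 0 then 0 else if i = 1 then 2 else if i = l-1 then 3 else (i+1) mod 2)"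

lemma mod2_Suc: "Suc a mod 2 \<noteq> (a::nat) mod 2" by (simp add: mod_Suc)
lemma par1: "(t::nat) mod 2 \<noteq> (L + 3) mod 2 \<Longrightarrow> t \<le> L + 2 \<Longrightarrow> t \<noteq> L + 2 \<Longrightarrow> t + 2 < L + 4" by presburger
lemma par2: "((t::nat) + s) mod 2 = t mod 2 \<Longrightarrow> s mod 2 = 0" by presburger
lemma par3: "((t::nat) + s) mod 2 \<noteq> t mod 2 \<Longrightarrow> s mod 2 = 1" by presburger

lemma vx0: assumes "d \<ge> 4" "l \<ge> 4" shows "ck_vertex d l (map (fx l) [0..<l])"
  unfolding ck_vertex_def
proof (intro conjI allI impI)
  show "length (map (fx l) [0..<l]) = l" by simp
  show "map (fx l) [0..<l] ! i < d + 1" if "i < l" for i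
  proof -
    have "fx l i \<le> 2" unfolding fx_def by auto
    then show ?thesis using that assms by simp
  qed
  show "map (fx l) [0..<l] ! i \<noteq> map (fx l) [0..<l] ! (i+1)" if "i+1 < l" for i
  proof -
    have "fx l i \<noteq> fx l (i+1)"
    proof (cases "i+1 = l-1")
      case True
      then have "fx l (i+1) = 2" "fx l i = (l-1-i) mod 2" using that unfolding fx_def by auto
      moreover have "(l-1-i) mod 2 < 2" by simp
      ultimately show ?thesis by linarith
    next
      case False
      then have "fx l (i+1) = (l-1-(i+1)) mod 2" "fx l i = (l-1-i) mod 2" using that unfolding fx_def by auto
      moreover have "l-1-i = Suc (l-1-(i+1))" using that False by simp
      ultimately show ?thesis using mod2_Suc by simp
    qed
    then show ?thesis using that by simp
  qed
  show "map (fx l) [0..<l] ! (l-1) \<noteq> map (fx l) [0..<l] ! 0"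
  proof -
    have "fx l (l-1) = 2" "fx l 0 = (l-1) mod 2" using assms unfolding fx_def by auto
    moreover have "(l-1) mod 2 < 2" by simp
    ultimately show ?thesis using assms by simp
  qed
qed

lemma vy0: assumes "d \<ge> 4" "l \<ge> 4" shows "ck_vertex d l (map (fy l) [0..<l])"
  unfolding ck_vertex_def
proof (intro conjI allI impI)
  show "length (map (fy l) [0..<l]) = l" by simp
  show "map (fy l) [0..<l] ! i < d + 1" if "i < l" for i
  proof -
    have "fy l i \<le> 3" unfolding fy_def by auto
    then show ?thesis using that assms by simp
  qed
  show "map (fy l) [0..<l] ! i \<noteq> map (fy l) [0..<l] ! (i+1)" if "i+1 < l" for i
  proof -
    have "fy l i \<noteq> fy l (i+1)"
    proof -
      consider (a) "i = 0" | (b) "i = 1" | (c) "i \<ge> 2" "i+1 = l-1" | (e) "i \<ge> 2" "i+1 \<noteq> l-1" by linarith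
      then show ?thesis
      proof cases
        case a then show ?thesis using assms unfolding fy_def by simp
      next
        case b then show ?thesis using assms unfolding fy_def by simp
      next
        case c
        then have "fy l (i+1) = 3" "fy l i = (i+1) mod 2" using assms unfolding fy_def by auto
        moreover have "(i+1) mod 2 < 2" by simp
        ultimately show ?thesis by linarith
      next
        case e
        then have "fy l (i+1) = (Suc (i+1)) mod 2" "fy l i = (i+1) mod 2" using that unfolding fy_def by auto
        then show ?thesis using mod2_Suc by simp
      qed
    qed
    then show ?thesis using that by simp
  qed
  show "map (fy l) [0..<l] ! (l-1) \<noteq> map (fy l) [0..<l] ! 0"
    using assms unfolding fy_def by simp
qed

lemma lower:
  assumes l: "l \<ge> 4" and wk: "(ck_arc d l ^^ n) (map (fx l) [0..<l]) (map (fy l) [0..<l])"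
  shows "2*l - 2 \<le> n"
proof (rule ccontr)
  assume nlt: "\<not> 2*l - 2 \<le> n"
  obtain w where w: "length w = l+n" "take l w = map (fx l) [0..<l]" "drop n w = map (fy l) [0..<l]"
    and cw: "\<forall>j. l \<le> j \<and> j < length w \<longrightarrow> w!j \<noteq> w!(j-1) \<and> w!j \<noteq> w!(j+1-l)"
    using seq_of_walk[OF _ wk] l by auto
  have xw: "w!i = fx l i" if "i < l" for i
  proof -
    have "take l w ! i = w!i" using that by simp
    then show ?thesis using w(2) that by simp
  qed
  have yw: "w!(n+i) = fy l i" if "i < l" for i
  proof -
    have "drop n w ! i = w!(n+i)" using that w(1) by simp
    then show ?thesis using w(3) that by simp
  qed
  show False
  proof (cases "n < l")
    case True
    define i where "i = (if n = l-2 then 0 else l-n-1)"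
    have i: "i < l" "n + i < l" unfolding i_def using True l by auto
    have "fy l i = fx l (n+i)" using xw[OF i(2)] yw[OF i(1)] by simp
    moreover have "fy l i \<noteq> fx l (n+i)"
    proof (cases "n = l-2")
      case True
      have "l-1-(l-2) = 1" "l-2 \<noteq> l-1" using l by auto
      then show ?thesis unfolding i_def fx_def fy_def using True by simp
    next
      case False
      then have "i = l-n-1" "n+i = l-1" unfolding i_def using \<open>n < l\<close> by auto
      then show ?thesis unfolding fx_def fy_def using False l \<open>n < l\<close> by auto
    qed
    ultimately show False by simp
  next
    case False
    define t where "t = n + 1 - l"
    have t: "1 \<le> t" "t \<le> l-2" "n = l - 1 + t" using False nlt l unfolding t_def by auto
    define m where "m = (if t mod 2 = (l-1) mod 2 then 0 else if t = l-2 then 1 else 2::nat)"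
    have t2: "t + 2 < l" if "t mod 2 \<noteq> (l-1) mod 2" "t \<noteq> l-2"
    proof -
      obtain L where L: "l = L + 4" using l by (metis add.commute le_Suc_ex)
      have e: "l - 1 = L + 3" "l - 2 = L + 2" using L by auto
      have "t mod 2 \<noteq> (L+3) mod 2" "t \<le> L+2" "t \<noteq> L+2" using that t unfolding e by auto
      then show ?thesis using par1 L by simp
    qed
    have m: "m < l" "t + m < l" unfolding m_def using t l t2 by auto
    have "l \<le> n+m \<and> n+m < length w" using m w(1) t by auto
    then have "w!(n+m) \<noteq> w!(n+m+1-l)" using cw by blast
    moreover have "n+m+1-l = t+m" using t by simp
    ultimately have "fy l m \<noteq> fx l (t+m)" using xw[OF m(2)] yw[OF m(1)] by simp
    moreover have "fy l m = fx l (t+m)"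
    proof -
      consider (a) "t mod 2 = (l-1) mod 2" | (b) "t mod 2 \<noteq> (l-1) mod 2" "t = l-2"
        | (c) "t mod 2 \<noteq> (l-1) mod 2" "t \<noteq> l-2" by blast
      then show ?thesis
      proof cases
        case a
        have "(t + (l-1-t)) mod 2 = t mod 2" using a t by simp
        then have "(l-1-t) mod 2 = 0" by (rule par2)
        then show ?thesis using a t unfolding m_def fx_def fy_def by simp
      next
        case b
        then show ?thesis using l unfolding m_def fx_def fy_def by simp
      next
        case c
        have "t + 2 < l" using t2 c by blast
        have e1: "(t+2) + (l-1-(t+2)) = l-1" using \<open>t+2<l\<close> by simp
        have e2: "(t+2) mod 2 = t mod 2" by simp
        have "((t+2) + (l-1-(t+2))) mod 2 \<noteq> (t+2) mod 2" unfolding e1 e2 using c by simp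
        then have "(l-1-(t+2)) mod 2 = 1" by (rule par3)
        moreover have "t+2 \<noteq> l-1"
        proof
          assume "t+2 = l-1"
          then have "(l-1) mod 2 = (t+2) mod 2" by simp
          then show False using c e2 by simp
        qed
        ultimately show ?thesis using c l unfolding m_def fx_def fy_def by simp
      qed
    qed
    ultimately show False by simp
  qed
qed


theorem theorem1:
  fixes d l :: nat
  assumes "d \<ge> 4" and "l \<ge> 4"
  shows "(\<forall>xs ys. ck_vertex d l xs \<longrightarrow> ck_vertex d l ys \<longrightarrow> (\<exists>n. (ck_arc d l ^^ n) xs ys))
         \<and> ck_diameter d l = 2 * l - 2"
proof
  show "\<forall>xs ys. ck_vertex d l xs \<longrightarrow> ck_vertex d l ys \<longrightarrow> (\<exists>n. (ck_arc d l ^^ n) xs ys)"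
    using upper[OF assms] by blast
  have le: "ck_dist d l xs ys \<le> 2*l-2" if v: "ck_vertex d l xs" "ck_vertex d l ys" for xs ys
  proof -
    obtain n where "n \<le> 2*l-2" "(ck_arc d l ^^ n) xs ys" using upper[OF assms v] by blast
    then show ?thesis unfolding ck_dist_def by (meson Least_le le_trans)
  qed
  define x0 where "x0 = map (fx l) [0..<l]"
  define y0 where "y0 = map (fy l) [0..<l]"
  have v0: "ck_vertex d l x0" "ck_vertex d l y0" unfolding x0_def y0_def using vx0 vy0 assms by auto
  have eq: "ck_dist d l x0 y0 = 2*l-2"
  proof -
    obtain n where n: "n \<le> 2*l-2" "(ck_arc d l ^^ n) x0 y0" using upper[OF assms v0] by blast
    have "2*l-2 \<le> n" using lower[OF assms(2)] n(2) unfolding x0_def y0_def by blast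
    then have n2: "n = 2*l-2" using n(1) by simp
    show ?thesis unfolding ck_dist_def
    proof (rule Least_equality)
      show "(ck_arc d l ^^ (2*l-2)) x0 y0" using n n2 by simp
      show "2*l-2 \<le> m" if "(ck_arc d l ^^ m) x0 y0" for m
        using lower[OF assms(2)] that unfolding x0_def y0_def by blast
    qed
  qed
  let ?S = "{ck_dist d l xs ys | xs ys. ck_vertex d l xs \<and> ck_vertex d l ys}"
  have sub: "?S \<subseteq> {..2*l-2}" using le by auto
  have fin: "finite ?S" using finite_subset[OF sub] by simp
  have mem: "2*l-2 \<in> ?S" using eq v0 by (metis (mono_tags, lifting) mem_Collect_eq)
  show "ck_diameter d l = 2 * l - 2" unfolding ck_diameter_def
    by (rule Max_eqI[OF fin]) (use sub mem in auto)
qed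

end
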